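(* Let $\Gamma=(Q,A,E,(\delta_e)_{e\in E})$ be an MEMDP, $e\ne e'\in E$ and $b\in\mathcal D(E)$. For $n\in\mathbb N$ let $\mathrm{Reveal}^n(\Gamma,b,e',e)$ be the set of infinite runs having a finite prefix $\rho\in Q\cdot(A\cdot Q)^*$ with $\mathrm{nb}_{\mathrm{rev}}(e',e,\rho)\ge n$ and $\mathrm{lk}_b(\rho)(e')\ne0$. Then for every $n\in\mathbb N$, every $q\in Q$ and every strategy $\sigma$, $$\mathbb P^\sigma_q[\Gamma[e],\mathrm{Reveal}^n(\Gamma,b,e',e)]\le(1-p_{\min}(\Gamma))^n.$$
   Context: An MEMDP is $\Gamma=(Q,A,E,(\delta_e)_{e\in E})$ with $Q,A,E$ finite non-empty and each $\Gamma[e]=(Q,A,\delta_e)$ an MDP; strategies are maps $Q\cdot(A\cdot Q)^*\to\mathcal D(A)$ and $\mathbb P^\sigma_q[\Gamma[e],\cdot]$ is the induced measure on infinite runs from $q$. Belief update: $p[b,q,a](q'):=\sum_f b(f)\delta_f(q,a)(q')$; if positive, $\lambda[b,q,a,q'](f):=b(f)\delta_f(q,a)(q')/p[b,q,a](q')$ (arbitrary otherwise); $\mathrm{lk}_b(q):=b$, $\mathrm{lk}_b(\rho\cdot(a,q')):=\lambda[\mathrm{lk}_b(\rho),\mathrm{last}(\rho),a,q']$. A pair $(q,a)$ is $e'/e$-revealing if some $q'$ has $\delta_{e'}(q,a)(q')=0<\delta_e(q,a)(q')$. For $\rho=q_0(a_1,q_1)\cdots(a_n,q_n)$, $\mathrm{nb}_{\mathrm{rev}}(e',e,\rho)$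 is the number of $i$ with $(q_{i-1},a_i)$ $e'/e$-revealing. $p_{\min}(\Gamma)=\min\{\delta_f(q,a)(q'): f\in E,\ \delta_f(q,a)(q')>0\}$.
   Formalization: The prior belief b is assumed to give e positive probability, $b(e)>0$. The statement above fails without it. *)

theory Defs
  imports "HOL-Probability.Probability"
begin

(* An MEMDP over finite types 'q (states), 'a (actions), 'e (environments) is given by
   delta :: 'e => 'q => 'a => 'q pmf ; Gamma[e] is the MDP with transition function delta e.
   A strategy is a map from histories Q.(A.Q)^* to D(A); a history q0 (a1,q1)...(an,qn)
   is represented by the pair (q0, [(a1,q1),...,(an,qn)]).
   An infinite run from q is q followed by a stream of (action,state) pairs. *)

type_synonym ('q,'a,'e) memdp = "'e \<Rightarrow> 'q \<Rightarrow> 'a \<Rightarrow> 'q pmf"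
type_synonym ('q,'a) strategy = "'q \<Rightarrow> ('a \<times> 'q) list \<Rightarrow> 'a pmf"

(* probability of the cylinder of a finite history in Gamma[e] under sigma:
   h = history so far (after q0), c = current state, remaining steps xs *)
fun path_prob :: "('q,'a,'e) memdp \<Rightarrow> 'e \<Rightarrow> ('q,'a) strategy \<Rightarrow> 'q \<Rightarrow>
                   ('a \<times> 'q) list \<Rightarrow> 'q \<Rightarrow> ('a \<times> 'q) list \<Rightarrow> real" where
  "path_prob \<delta> e \<sigma> q0 h c [] = 1"
| "path_prob \<delta> e \<sigma> q0 h c ((a, q') # xs) =
     pmf (\<sigma> q0 h) a * pmf (\<delta> e c a) q' * path_prob \<delta> e \<sigma> q0 (h @ [(a, q')]) q' xs"

(* M is the measure P^sigma_q[Gamma[e], -] on infinite runs from q (runs q.(A.Q)^omega,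
   represented by their tail stream): the unique probability measure on the product
   sigma-algebra whose cylinder probabilities are the products of strategy and
   transition probabilities. *)
definition is_run_measure ::
  "('q,'a,'e) memdp \<Rightarrow> 'e \<Rightarrow> ('q,'a) strategy \<Rightarrow> 'q \<Rightarrow> ('a \<times> 'q) stream measure \<Rightarrow> bool" where
  "is_run_measure \<delta> e \<sigma> q M \<longleftrightarrow>
     sets M = sets (stream_space (count_space UNIV)) \<and> prob_space M \<and>
     (\<forall>xs. emeasure M {\<omega> \<in> space M. stake (length xs) \<omega> = xs}
             = ennreal (path_prob \<delta> e \<sigma> q [] q xs))"

definition bel_p :: "('q,'a,'e::finite) memdp \<Rightarrow> ('e \<Rightarrow> real) \<Rightarrow> 'q \<Rightarrow> 'a \<Rightarrow> 'q \<Rightarrow> real" where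
  "bel_p \<delta> b q a q' = (\<Sum>f\<in>UNIV. b f * pmf (\<delta> f q a) q')"

(* lambda[b,q,a,q']; fb is the (arbitrary) choice of a distribution used when p = 0 *)
definition bel_upd :: "('q,'a,'e::finite) memdp \<Rightarrow> (('e \<Rightarrow> real) \<Rightarrow> 'q \<Rightarrow> 'a \<Rightarrow> 'q \<Rightarrow> 'e pmf) \<Rightarrow>
                       ('e \<Rightarrow> real) \<Rightarrow> 'q \<Rightarrow> 'a \<Rightarrow> 'q \<Rightarrow> ('e \<Rightarrow> real)" where
  "bel_upd \<delta> fb b q a q' =
     (if bel_p \<delta> b q a q' > 0
      then (\<lambda>f. b f * pmf (\<delta> f q a) q' / bel_p \<delta> b q a q')
      else pmf (fb b q a q'))"

fun lk :: "('q,'a,'e::finite) memdp \<Rightarrow> (('e \<Rightarrow> real) \<Rightarrow> 'q \<Rightarrow> 'a \<Rightarrow> 'q \<Rightarrow> 'e pmf) \<Rightarrow>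
           ('e \<Rightarrow> real) \<Rightarrow> 'q \<Rightarrow> ('a \<times> 'q) list \<Rightarrow> ('e \<Rightarrow> real)" where
  "lk \<delta> fb b q0 [] = b"
| "lk \<delta> fb b q0 ((a, q') # xs) = lk \<delta> fb (bel_upd \<delta> fb b q0 a q') q' xs"

definition revealing :: "('q,'a,'e) memdp \<Rightarrow> 'e \<Rightarrow> 'e \<Rightarrow> 'q \<Rightarrow> 'a \<Rightarrow> bool" where
  "revealing \<delta> e' e q a \<longleftrightarrow> (\<exists>q'. pmf (\<delta> e' q a) q' = 0 \<and> 0 < pmf (\<delta> e q a) q')"

fun nb_rev :: "('q,'a,'e) memdp \<Rightarrow> 'e \<Rightarrow> 'e \<Rightarrow> 'q \<Rightarrow> ('a \<times> 'q) list \<Rightarrow> nat" where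
  "nb_rev \<delta> e' e q0 [] = 0"
| "nb_rev \<delta> e' e q0 ((a, q') # xs) = (if revealing \<delta> e' e q0 a then 1 else 0) + nb_rev \<delta> e' e q' xs"

definition p_min :: "('q,'a,'e) memdp \<Rightarrow> real" where
  "p_min \<delta> = Min {pmf (\<delta> f q a) q' | f q a q'. pmf (\<delta> f q a) q' > 0}"

definition Reveal :: "('q,'a,'e::finite) memdp \<Rightarrow> (('e \<Rightarrow> real) \<Rightarrow> 'q \<Rightarrow> 'a \<Rightarrow> 'q \<Rightarrow> 'e pmf) \<Rightarrow>
                      nat \<Rightarrow> 'e pmf \<Rightarrow> 'e \<Rightarrow> 'e \<Rightarrow> 'q \<Rightarrow> ('a \<times> 'q) stream set" where
  "Reveal \<delta> fb n b e' e q0 =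
     {\<omega>. \<exists>k. nb_rev \<delta> e' e q0 (stake k \<omega>) \<ge> n \<and> lk \<delta> fb (pmf b) q0 (stake k \<omega>) e' \<noteq> 0}"

end

theory Submission
  imports Defs
begin

fun alive :: "('q,'a,'e) memdp \<Rightarrow> 'e \<Rightarrow> 'q \<Rightarrow> ('a \<times> 'q) list \<Rightarrow> bool" where
  "alive \<delta> e' c [] = True"
| "alive \<delta> e' c ((a, q') # xs) = (pmf (\<delta> e' c a) q' > 0 \<and> alive \<delta> e' q' xs)"

definition Gd :: "('q,'a,'e) memdp \<Rightarrow> 'e \<Rightarrow> 'e \<Rightarrow> nat \<Rightarrow> 'q \<Rightarrow> ('a \<times> 'q) list \<Rightarrow> bool" where
  "Gd \<delta> e' e n c xs = (\<exists>k\<le>length xs. n \<le> nb_rev \<delta> e' e c (take k xs) \<and> alive \<delta> e' c (take k xs))"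

lemma ex_le_Suc: "(\<exists>k\<le>Suc m. P k) \<longleftrightarrow> P 0 \<or> (\<exists>j\<le>m. P (Suc j))"
  by (metis Suc_le_mono le0 not0_implies_Suc)

lemma Gd_Nil: "Gd \<delta> e' e n c [] \<longleftrightarrow> n = 0"
  by (simp add: Gd_def)

lemma Gd_Cons: "Gd \<delta> e' e n c ((a,q') # ys) \<longleftrightarrow> n = 0 \<or>
   (pmf (\<delta> e' c a) q' > 0 \<and> Gd \<delta> e' e (n - (if revealing \<delta> e' e c a then 1 else 0)) q' ys)"
  unfolding Gd_def
  apply (subst length_Cons)
  apply (subst ex_le_Suc)
  apply auto
  done

lemma finite_L: "finite {xs :: ('b::finite) list. length xs = K}"
  using finite_lists_length_eq[of "UNIV :: 'b set" K] by simp

lemma sum_pair_UNIV: "(\<Sum>x\<in>(UNIV::('a::finite\<times>'b::finite) set). g x) = (\<Sum>a\<in>UNIV. \<Sum>b\<in>UNIV. g (a,b))"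
  unfolding UNIV_Times_UNIV[symmetric] sum.cartesian_product by simp

lemma sum_L_Suc:
  "(\<Sum>xs\<in>{xs :: ('a::finite \<times> 'q::finite) list. length xs = Suc K}. f xs) =
   (\<Sum>a\<in>UNIV. \<Sum>q'\<in>UNIV. \<Sum>ys\<in>{ys. length ys = K}. f ((a,q') # ys))"
proof -
  have eq: "{xs :: ('a \<times> 'q) list. length xs = Suc K} = (\<lambda>(x,ys). x # ys) ` (UNIV \<times> {ys. length ys = K})"
    by (auto simp: length_Suc_conv image_iff)
  have inj: "inj_on (\<lambda>(x,ys). x # ys) (UNIV \<times> {ys :: ('a \<times> 'q) list. length ys = K})"
    by (auto simp: inj_on_def)
  have "(\<Sum>xs\<in>{xs :: ('a \<times> 'q) list. length xs = Suc K}. f xs) =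
        (\<Sum>p\<in>UNIV \<times> {ys. length ys = K}. f (fst p # snd p))"
    unfolding eq by (subst sum.reindex[OF inj]) (simp add: case_prod_beta)
  also have "\<dots> = (\<Sum>x\<in>UNIV. \<Sum>ys\<in>{ys. length ys = K}. f (x # ys))"
    by (simp add: sum.cartesian_product split_beta)
  also have "\<dots> = (\<Sum>a\<in>UNIV. \<Sum>q'\<in>UNIV. \<Sum>ys\<in>{ys. length ys = K}. f ((a,q') # ys))"
    by (rule sum_pair_UNIV)
  finally show ?thesis .
qed

lemma pp_nonneg: "path_prob \<delta> e \<sigma> q0 h c xs \<ge> 0"
  by (induction xs arbitrary: h c) auto

lemma pp_sum: "(\<Sum>xs\<in>{xs :: ('a::finite \<times> 'q::finite) list. length xs = K}. path_prob \<delta> e \<sigma> q0 h c xs) = 1"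
proof (induction K arbitrary: h c)
  case 0
  then show ?case by simp
next
  case (Suc K)
  show ?case
    apply (subst sum_L_Suc)
    apply (simp add: Suc sum_distrib_left[symmetric] sum_pmf_eq_1 mult.assoc)
    done
qed

lemma W_bound:
  fixes \<delta> :: "('q::finite,'a::finite,'e) memdp" and p :: real
  assumes p1: "p \<le> 1"
    and p2: "\<And>c a. revealing \<delta> e' e c a \<Longrightarrow> \<exists>qs. pmf (\<delta> e' c a) qs = 0 \<and> p \<le> pmf (\<delta> e c a) qs"
  shows "(\<Sum>xs\<in>{xs. length xs = K}. path_prob \<delta> e \<sigma> q0 h c xs * (if Gd \<delta> e' e n c xs then 1 else 0)) \<le> (1 - p)^n"
proof (induction K arbitrary: h c n)
  case 0
  have "0 \<le> (1 - p)^n" using p1 by simp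
  then show ?case by (simp add: Gd_Nil)
next
  case (Suc K)
  show ?case
  proof (cases n)
    case 0
    have "Gd \<delta> e' e n c xs" for xs using 0 by (auto simp: Gd_def)
    then show ?thesis using 0 pp_sum[of \<delta> e \<sigma> q0 h c "Suc K"] by simp
  next
    case (Suc m)
    define r :: "'a \<Rightarrow> nat" where "r a = (if revealing \<delta> e' e c a then 1 else 0)" for a
    define W' where "W' a q' = (\<Sum>ys\<in>{ys. length ys = K}. path_prob \<delta> e \<sigma> q0 (h @ [(a,q')]) q' ys *
         (if Gd \<delta> e' e (n - r a) q' ys then 1 else 0))" for a q'
    define I where "I a = (\<Sum>q'\<in>UNIV. pmf (\<delta> e c a) q' * (if pmf (\<delta> e' c a) q' > 0 then W' a q' else 0))" for a
    have IH: "W' a q' \<le> (1 - p) ^ (n - r a)" for a q'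
      unfolding W'_def by (rule Suc.IH)
    have pos: "0 \<le> 1 - p" using p1 by simp
    have eq: "(\<Sum>xs\<in>{xs. length xs = Suc K}. path_prob \<delta> e \<sigma> q0 h c xs * (if Gd \<delta> e' e n c xs then 1 else 0))
        = (\<Sum>a\<in>UNIV. pmf (\<sigma> q0 h) a * I a)"
      unfolding sum_L_Suc I_def sum_distrib_left
    proof (intro sum.cong refl)
      fix a q'
      show "(\<Sum>ys\<in>{ys. length ys = K}. path_prob \<delta> e \<sigma> q0 h c ((a, q') # ys) * (if Gd \<delta> e' e n c ((a, q') # ys) then 1 else 0)) =
          pmf (\<sigma> q0 h) a * (pmf (\<delta> e c a) q' * (if 0 < pmf (\<delta> e' c a) q' then W' a q' else 0))"
        using Suc by (cases "0 < pmf (\<delta> e' c a) q'")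
          (simp_all add: Gd_Cons W'_def r_def sum_distrib_left mult.assoc)
    qed
    have Ib: "I a \<le> (1 - p) ^ n" for a
    proof (cases "revealing \<delta> e' e c a")
      case False
      have "I a \<le> (\<Sum>q'\<in>UNIV. pmf (\<delta> e c a) q' * (1 - p) ^ n)"
        unfolding I_def
        apply (rule sum_mono)
        apply (rule mult_left_mono)
        using IH[of a] False pos by (auto simp: r_def)
      also have "\<dots> = (1 - p) ^ n"
        by (simp add: sum_distrib_right[symmetric] sum_pmf_eq_1)
      finally show ?thesis .
    next
      case True
      then obtain qs where qs: "pmf (\<delta> e' c a) qs = 0" "p \<le> pmf (\<delta> e c a) qs" using p2 by blast
      have "I a \<le> (\<Sum>q'\<in>UNIV. pmf (\<delta> e c a) q' * ((1 - p) ^ m - (if q' = qs then (1 - p) ^ m else 0)))"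
        unfolding I_def
        apply (rule sum_mono)
        apply (rule mult_left_mono)
        using IH[of a] True pos qs Suc by (auto simp: r_def)
      also have "\<dots> = (1 - pmf (\<delta> e c a) qs) * (1 - p) ^ m"
        by (simp add: right_diff_distrib sum_subtractf sum_distrib_right[symmetric] sum_pmf_eq_1 left_diff_distrib
            if_distrib[of "\<lambda>x. _ * x"] cong: if_cong)
      also have "\<dots> \<le> (1 - p) * (1 - p) ^ m"
        using qs pos by (intro mult_right_mono) auto
      finally show ?thesis using Suc by simp
    qed
    have "(\<Sum>a\<in>UNIV. pmf (\<sigma> q0 h) a * I a) \<le> (\<Sum>a\<in>UNIV. pmf (\<sigma> q0 h) a * (1 - p) ^ n)"
      by (intro sum_mono mult_left_mono Ib) auto
    also have "\<dots> = (1 - p) ^ n"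
      by (simp add: sum_distrib_right[symmetric] sum_pmf_eq_1)
    finally show ?thesis using eq by simp
  qed
qed


lemma pp_pos_alive: "path_prob \<delta> e \<sigma> q0 h c xs > 0 \<Longrightarrow> alive \<delta> e c xs"
proof (induction xs arbitrary: h c)
  case Nil
  then show ?case by simp
next
  case (Cons x xs)
  obtain a q' where x: "x = (a, q')" by (cases x)
  have n1: "pmf (\<sigma> q0 h) a \<ge> 0" "pmf (\<delta> e c a) q' \<ge> 0" "path_prob \<delta> e \<sigma> q0 (h @ [(a, q')]) q' xs \<ge> 0"
    by (auto simp: pp_nonneg)
  have pr: "pmf (\<sigma> q0 h) a * pmf (\<delta> e c a) q' * path_prob \<delta> e \<sigma> q0 (h @ [(a, q')]) q' xs > 0"
    using Cons.prems x by simp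
  have "pmf (\<delta> e c a) q' \<noteq> 0" "path_prob \<delta> e \<sigma> q0 (h @ [(a, q')]) q' xs \<noteq> 0"
    using pr by auto
  then have "pmf (\<delta> e c a) q' > 0" "path_prob \<delta> e \<sigma> q0 (h @ [(a, q')]) q' xs > 0"
    using n1 by auto
  then show ?case using Cons.IH x by auto
qed

lemma pp_take_zero: "path_prob \<delta> e \<sigma> q0 h c (take k xs) = 0 \<Longrightarrow> path_prob \<delta> e \<sigma> q0 h c xs = 0"
proof (induction xs arbitrary: h c k)
  case Nil
  then show ?case by simp
next
  case (Cons x xs)
  obtain a q' where x: "x = (a, q')" by (cases x)
  show ?case
  proof (cases k)
    case 0
    then show ?thesis using Cons.prems by simp
  next
    case (Suc j)
    then show ?thesis using Cons.prems Cons.IH[of "h @ [(a, q')]" q' j] x by auto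
  qed
qed

lemma lk_alive:
  fixes \<delta> :: "('q,'a,'e::finite) memdp"
  assumes "\<And>f. \<beta> f \<ge> 0" "\<beta> e > 0" "alive \<delta> e c xs" "lk \<delta> fb \<beta> c xs e' \<noteq> 0"
  shows "\<beta> e' \<noteq> 0 \<and> alive \<delta> e' c xs"
  using assms
proof (induction xs arbitrary: \<beta> c)
  case Nil
  then show ?case by simp
next
  case (Cons x xs)
  obtain a q' where x: "x = (a, q')" by (cases x)
  have de: "pmf (\<delta> e c a) q' > 0" using Cons.prems(3) x by simp
  have "\<beta> e * pmf (\<delta> e c a) q' \<le> bel_p \<delta> \<beta> c a q'"
    unfolding bel_p_def
    by (rule member_le_sum) (auto intro: mult_nonneg_nonneg Cons.prems(1))
  moreover have "\<beta> e * pmf (\<delta> e c a) q' > 0" using de Cons.prems(2) by simp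
  ultimately have p: "bel_p \<delta> \<beta> c a q' > 0" by linarith
  define \<beta>' where "\<beta>' = bel_upd \<delta> fb \<beta> c a q'"
  have b': "\<beta>' = (\<lambda>f. \<beta> f * pmf (\<delta> f c a) q' / bel_p \<delta> \<beta> c a q')"
    using p unfolding \<beta>'_def bel_upd_def by simp
  have "\<beta>' e' \<noteq> 0 \<and> alive \<delta> e' q' xs"
  proof (rule Cons.IH)
    show "\<beta>' f \<ge> 0" for f using b' p Cons.prems(1)[of f] by simp
    show "\<beta>' e > 0" using b' p Cons.prems(2) de by simp
    show "alive \<delta> e q' xs" using Cons.prems(3) x by simp
    show "lk \<delta> fb \<beta>' q' xs e' \<noteq> 0" using Cons.prems(4) x \<beta>'_def by simp
  qed
  then have "\<beta> e' \<noteq> 0" "pmf (\<delta> e' c a) q' \<noteq> 0" "alive \<delta> e' q' xs" using b' by auto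
  then show ?case using x pmf_nonneg[of "\<delta> e' c a" q'] by auto
qed

lemma pmin_facts:
  fixes \<delta> :: "('q::finite,'a::finite,'e::finite) memdp"
  shows "p_min \<delta> \<le> 1"
    and "revealing \<delta> e' e c a \<Longrightarrow> \<exists>qs. pmf (\<delta> e' c a) qs = 0 \<and> p_min \<delta> \<le> pmf (\<delta> e c a) qs"
proof -
  let ?S = "{pmf (\<delta> f q a) q' | f q a q'. pmf (\<delta> f q a) q' > 0}"
  have fin: "finite ?S"
  proof (rule finite_subset)
    show "?S \<subseteq> (\<lambda>(f,q,a,q'). pmf (\<delta> f q a) q') ` UNIV" by (auto simp: image_iff) blast
  qed simp
  have le: "pmf (\<delta> f q a) q' > 0 \<Longrightarrow> p_min \<delta> \<le> pmf (\<delta> f q a) q'" for f q a q'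
    unfolding p_min_def by (rule Min_le[OF fin]) auto
  obtain f :: 'e and q0 :: 'q and a0 :: 'a where True by simp
  obtain q' where "q' \<in> set_pmf (\<delta> f q0 a0)" using set_pmf_not_empty by fast
  then have "pmf (\<delta> f q0 a0) q' > 0" by (simp add: pmf_positive)
  then show "p_min \<delta> \<le> 1" using le pmf_le_1[of "\<delta> f q0 a0" q'] by fastforce
  show "revealing \<delta> e' e c a \<Longrightarrow> \<exists>qs. pmf (\<delta> e' c a) qs = 0 \<and> p_min \<delta> \<le> pmf (\<delta> e c a) qs"
    unfolding revealing_def using le by blast
qed


lemma stake_sets:
  "{\<omega>. P (stake K \<omega>)} \<in> sets (stream_space (count_space (UNIV :: ('b::countable) set)))"
proof -
  have "stake K -` {xs. P xs} \<inter> space (stream_space (count_space (UNIV :: 'b set)))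
      \<in> sets (stream_space (count_space UNIV))"
    by (rule measurable_sets[OF measurable_stake]) simp
  moreover have "stake K -` {xs. P xs} \<inter> space (stream_space (count_space (UNIV :: 'b set))) = {\<omega>. P (stake K \<omega>)}"
    by (auto simp: space_stream_space)
  ultimately show ?thesis by metis
qed

theorem mainTheorem17:
  fixes \<delta> :: "('q::finite, 'a::finite, 'e::finite) memdp"
    and fb :: "('e \<Rightarrow> real) \<Rightarrow> 'q \<Rightarrow> 'a \<Rightarrow> 'q \<Rightarrow> 'e pmf"
    and b :: "'e pmf" and e e' :: 'e and n :: nat and q :: 'q
    and \<sigma> :: "('q, 'a) strategy" and M :: "('a \<times> 'q) stream measure"
  assumes "e \<noteq> e'"
    and "pmf b e > 0"
    and "is_run_measure \<delta> e \<sigma> q M"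
  shows "measure M (Reveal \<delta> fb n b e' e q) \<le> (1 - p_min \<delta>) ^ n"
proof -
  have sM: "sets M = sets (stream_space (count_space UNIV))" and "prob_space M"
    and cyl: "\<And>xs. emeasure M {\<omega> \<in> space M. stake (length xs) \<omega> = xs} = ennreal (path_prob \<delta> e \<sigma> q [] q xs)"
    using assms(3) unfolding is_run_measure_def by auto
  interpret prob_space M by fact
  have spM: "space M = UNIV"
    using sets_eq_imp_space_eq[OF sM] by (simp add: space_stream_space)
  have setsM: "{\<omega>. P (stake K \<omega>)} \<in> sets M" for P K
    unfolding sM by (rule stake_sets)
  define pp where "pp xs = path_prob \<delta> e \<sigma> q [] q xs" for xs
  define H where "H xs = (\<exists>k\<le>length xs. (n \<le> nb_rev \<delta> e' e q (take k xs) \<and> alive \<delta> e' q (take k xs))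
       \<or> pp (take k xs) = 0)" for xs
  define T where "T K = {\<omega>. H (stake K \<omega>)}" for K
  have Tsets: "T K \<in> sets M" for K unfolding T_def by (rule setsM)
  have Tinc: "incseq T"
  proof (rule incseq_SucI)
    fix K show "T K \<subseteq> T (Suc K)"
    proof
      fix \<omega> assume "\<omega> \<in> T K"
      then obtain k where "k \<le> K" "(n \<le> nb_rev \<delta> e' e q (take k (stake K \<omega>)) \<and> alive \<delta> e' q (take k (stake K \<omega>)))
       \<or> pp (take k (stake K \<omega>)) = 0" unfolding T_def H_def by auto
      moreover have "take k (stake K \<omega>) = take k (stake (Suc K) \<omega>)"
        using \<open>k \<le> K\<close> by (simp only: take_stake min_def) simp
      ultimately show "\<omega> \<in> T (Suc K)" unfolding T_def H_def
        by (intro CollectI exI[of _ k]) auto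
    qed
  qed
  have measT: "measure M (T K) \<le> (1 - p_min \<delta>) ^ n" for K
  proof -
    let ?L = "{xs :: ('a \<times> 'q) list. length xs = K \<and> H xs}"
    have finL: "finite ?L" using finite_L[of K] by (rule finite_subset[rotated]) auto
    have TU: "T K = (\<Union>xs\<in>?L. {\<omega> \<in> space M. stake (length xs) \<omega> = xs})"
      unfolding T_def spM by auto
    have "measure M (T K) = (\<Sum>xs\<in>?L. measure M {\<omega> \<in> space M. stake (length xs) \<omega> = xs})"
      unfolding TU
    proof (rule measure_finite_Union[OF finL])
      show "(\<lambda>xs. {\<omega> \<in> space M. stake (length xs) \<omega> = xs}) ` ?L \<subseteq> sets M"
        using setsM by (auto simp: spM)
      show "disjoint_family_on (\<lambda>xs. {\<omega> \<in> space M. stake (length xs) \<omega> = xs}) ?L"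
        by (auto simp: disjoint_family_on_def)
    qed (simp add: cyl)
    also have "\<dots> = (\<Sum>xs\<in>?L. pp xs)"
    proof (rule sum.cong[OF refl])
      fix xs :: "('a \<times> 'q) list"
      show "measure M {\<omega> \<in> space M. stake (length xs) \<omega> = xs} = pp xs"
        unfolding measure_def cyl pp_def using pp_nonneg[of \<delta> e \<sigma> q "[]" q xs] by simp
    qed
    also have "\<dots> = (\<Sum>xs\<in>{xs. length xs = K}. pp xs * (if H xs then 1 else 0))"
    proof -
      have "?L = {xs \<in> {xs. length xs = K}. H xs}" by auto
      then have "(\<Sum>xs\<in>?L. pp xs) = (\<Sum>xs\<in>{xs. length xs = K}. if H xs then pp xs else 0)"
        using sum.inter_filter[OF finite_L, of pp K H] by simp
      then show ?thesis by (simp add: if_distrib[of "\<lambda>x. _ * x"] cong: if_cong)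
    qed
    also have "\<dots> \<le> (\<Sum>xs\<in>{xs. length xs = K}. pp xs * (if Gd \<delta> e' e n q xs then 1 else 0))"
    proof (intro sum_mono)
      fix xs :: "('a \<times> 'q) list"
      show "pp xs * (if H xs then 1 else 0) \<le> pp xs * (if Gd \<delta> e' e n q xs then 1 else 0)"
      proof (cases "H xs")
        case True
        then obtain k where k: "k \<le> length xs" "(n \<le> nb_rev \<delta> e' e q (take k xs) \<and> alive \<delta> e' q (take k xs))
          \<or> pp (take k xs) = 0" unfolding H_def by blast
        from k(2) show ?thesis
        proof
          assume "n \<le> nb_rev \<delta> e' e q (take k xs) \<and> alive \<delta> e' q (take k xs)"
          then have "Gd \<delta> e' e n q xs" unfolding Gd_def using k(1) by blast
          then show ?thesis using True by simp
        next
          assume "pp (take k xs) = 0"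
          then have "pp xs = 0" unfolding pp_def by (rule pp_take_zero)
          then show ?thesis by simp
        qed
      qed (simp add: pp_def pp_nonneg)
    qed
    also have "\<dots> \<le> (1 - p_min \<delta>) ^ n"
      unfolding pp_def by (rule W_bound[OF pmin_facts])
    finally show ?thesis .
  qed
  have sub: "Reveal \<delta> fb n b e' e q \<subseteq> (\<Union>K. T K)"
  proof
    fix \<omega> assume "\<omega> \<in> Reveal \<delta> fb n b e' e q"
    then obtain k where k: "n \<le> nb_rev \<delta> e' e q (stake k \<omega>)" "lk \<delta> fb (pmf b) q (stake k \<omega>) e' \<noteq> 0"
      unfolding Reveal_def by blast
    have "H (stake k \<omega>)"
    proof (cases "pp (stake k \<omega>) = 0")
      case True
      then show ?thesis unfolding H_def by (intro exI[of _ k]) simp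
    next
      case False
      then have "pp (stake k \<omega>) > 0" using pp_nonneg unfolding pp_def
        by (metis order_le_less)
      then have "alive \<delta> e q (stake k \<omega>)" unfolding pp_def by (rule pp_pos_alive)
      then have "alive \<delta> e' q (stake k \<omega>)"
        using lk_alive[of "pmf b" e \<delta> q "stake k \<omega>" fb e'] k(2) assms(2) by auto
      then show ?thesis unfolding H_def using k(1) by (intro exI[of _ k]) simp
    qed
    then show "\<omega> \<in> (\<Union>K. T K)" unfolding T_def by blast
  qed
  have "measure M (Reveal \<delta> fb n b e' e q) \<le> measure M (\<Union>K. T K)"
    by (rule finite_measure_mono[OF sub]) (use Tsets in auto)
  also have "\<dots> \<le> (1 - p_min \<delta>) ^ n"
  proof (rule LIMSEQ_le_const2)
    show "(\<lambda>K. measure M (T K)) \<longlonglongrightarrow> measure M (\<Union>K. T K)"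
      by (rule finite_Lim_measure_incseq) (use Tsets Tinc in auto)
    show "\<exists>N. \<forall>K\<ge>N. measure M (T K) \<le> (1 - p_min \<delta>) ^ n" using measT by blast
  qed
  finally show ?thesis .
qed

end
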